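(* Let $V$ be a nonempty set, $E\subset V\times V$, $W\subset V$, and let $B,C\subset V$ satisfy $B\cap C=\emptyset$, $B\cap W=\emptyset$, $C\cap W=\emptyset$. Let $b\in B$ and $c\in C$ be such that $b\,A_W\,c$ and $\operatorname{cl}_W(\{b\})\cap\operatorname{cl}_W(\{c\})=\emptyset$. Then there exist $w_b,w_c\in W$ with $w_b\,C_W\,w_c$ such that $\operatorname{cl}_W(\{b\})\cap\operatorname{cl}_W(\{w_b\})\neq\emptyset$ and $\operatorname{cl}_W(\{c\})\cap\operatorname{cl}_W(\{w_c\})\neq\emptyset$.
   Context: Relations on $V$: $x\,R\,y$ means $(x,y)\in R$; composition $RR'$: $x(RR')y$ iff there is $z$ with $xRz$ and $zR'y$; $R^{-1}$ is the converse; $R^0=\Delta$, $R^{n+1}=RR^n$, $R^+=\bigcup_{k\ge1}R^k$, $R^*=\bigcup_{k\ge0}R^k$. For $S\subset V$, $\Delta_S=\{(x,x):x\in S\}$, $\Delta=\Delta_V$. For any relation $F$, $\mathcal T_F=\{O\subset V: OF\subset O\}$ is a topology on $V$, where $OF=\{y:\exists o\in O,\ oFy\}$. With $W^c=V\setminus W$: $E_W=\Delta_{W^c}E$; $B_W=E(E_W)^*$; $B_W^-=(B_W)^{-1}=(E_W^{-1})^*E^{-1}$; $K_W=B_W^-\Delta_{W^c}B_W$; $C_W=(\Delta_WK_W\Delta_W)^+\cup\Delta_W$ (a partial equivalence relation); $A_W=\Delta\cup B_W\cup B_W^-\cup K_W\cup(B_W\cup K_W)\,C_W\,(B_W^-\cup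 K_W^{-1})$. For $S\subset V$, $\operatorname{cl}_W(S)$ is the topological closure of $S$ in the topology $\mathcal T_{E_W}$. *)

theory Defs
  imports "HOL-Analysis.Analysis"
begin

definition rstar :: "'a set \<Rightarrow> 'a rel \<Rightarrow> 'a rel" where
  "rstar V R = Id_on V \<union> R\<^sup>+"

definition EW :: "'a set \<Rightarrow> 'a rel \<Rightarrow> 'a set \<Rightarrow> 'a rel" where
  "EW V E W = Id_on (V - W) O E"

definition BW :: "'a set \<Rightarrow> 'a rel \<Rightarrow> 'a set \<Rightarrow> 'a rel" where
  "BW V E W = E O rstar V (EW V E W)"

definition BWm :: "'a set \<Rightarrow> 'a rel \<Rightarrow> 'a set \<Rightarrow> 'a rel" where
  "BWm V E W = converse (BW V E W)"

definition KW :: "'a set \<Rightarrow> 'a rel \<Rightarrow> 'a set \<Rightarrow> 'a rel" where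
  "KW V E W = BWm V E W O Id_on (V - W) O BW V E W"

definition CW :: "'a set \<Rightarrow> 'a rel \<Rightarrow> 'a set \<Rightarrow> 'a rel" where
  "CW V E W = (Id_on W O KW V E W O Id_on W)\<^sup>+ \<union> Id_on W"

definition AW :: "'a set \<Rightarrow> 'a rel \<Rightarrow> 'a set \<Rightarrow> 'a rel" where
  "AW V E W = Id_on V \<union> BW V E W \<union> BWm V E W \<union> KW V E W
     \<union> (BW V E W \<union> KW V E W) O CW V E W O (BWm V E W \<union> converse (KW V E W))"

definition rel_topology :: "'a set \<Rightarrow> 'a rel \<Rightarrow> 'a topology" where
  "rel_topology V F = topology (\<lambda>U. U \<subseteq> V \<and> F `` U \<subseteq> U)"

definition clW :: "'a set \<Rightarrow> 'a rel \<Rightarrow> 'a set \<Rightarrow> 'a set \<Rightarrow> 'a set" where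
  "clW V E W S = (rel_topology V (EW V E W)) closure_of S"

end

theory Submission
  imports Defs
begin

lemma istop_rel: "istopology (\<lambda>U. U \<subseteq> V \<and> F `` U \<subseteq> U)"
  unfolding istopology_def by blast

lemma openin_rel: "openin (rel_topology V F) U \<longleftrightarrow> U \<subseteq> V \<and> F `` U \<subseteq> U"
  unfolding rel_topology_def by (subst topology_inverse'[OF istop_rel]) simp

lemma A:
  assumes E: "E \<subseteq> V \<times> V" 
  shows   "openin (rel_topology V (EW V E W)) V"
    unfolding openin_rel
  proof
    show "EW V E W `` V \<subseteq> V"
    proof
      fix y assume "y \<in> EW V E W `` V"
      then obtain u where "(u, y) \<in> EW V E W" by blast
      then have "(u, y) \<in> E" unfolding EW_def by auto
      then show "y \<in> V" using E by auto
    qed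
  qed simp

lemma in_clW:
  assumes E: "E \<subseteq> V \<times> V" and x: "x \<in> V" and p: "(x, s) \<in> (EW V E W)\<^sup>*"
  shows "x \<in> clW V E W {s}"
proof -
  have Vo: "openin (rel_topology V (EW V E W)) V"
    using A[OF E] .
  have 1: "x \<in> topspace (rel_topology V (EW V E W))"
    by (rule subsetD[OF openin_subset[OF Vo] x])
  have 2: "\<forall>T. x \<in> T \<and> openin (rel_topology V (EW V E W)) T \<longrightarrow> {s} \<inter> T \<noteq> {}"
  proof (intro allI impI)
    fix T assume that: "x \<in> T \<and> openin (rel_topology V (EW V E W)) T"
    have cl: "EW V E W `` T \<subseteq> T" using that by (simp add: openin_rel)
    have "s \<in> T" using p that
    proof (induction rule: rtrancl_induct)
      case base then show ?case by blast
    next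
      case (step y z) then show ?case using cl by blast
    qed
    then show "{s} \<inter> T \<noteq> {}" by blast
  qed
  show ?thesis unfolding clW_def in_closure_of using 1 2 by simp
qed
lemma BW_path:
  assumes E: "E \<subseteq> V \<times> V" and uv: "(u, v) \<in> BW V E W" and u: "u \<in> V" "u \<notin> W"
  shows "(u, v) \<in> (EW V E W)\<^sup>*"
proof -
  obtain z where uz: "(u, z) \<in> E" and zv: "(z, v) \<in> rstar V (EW V E W)"
    using uv unfolding BW_def by (rule relcompE) simp
  have "(u, z) \<in> EW V E W" using uz u unfolding EW_def by (intro relcompI[of u u]) auto
  moreover have "(z, v) \<in> (EW V E W)\<^sup>*" using zv unfolding rstar_def by auto
  ultimately show ?thesis by simp
qed

lemma BW_cl:
  assumes E: "E \<subseteq> V \<times> V" and uv: "(u, v) \<in> BW V E W" and u: "u \<in> V" "u \<notin> W"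
  shows "u \<in> clW V E W {v}"
  using in_clW[OF E u(1) BW_path[OF E uv u]] .

lemma KW_common:
  assumes E: "E \<subseteq> V \<times> V" and kw: "(x, y) \<in> KW V E W"
  shows "clW V E W {x} \<inter> clW V E W {y} \<noteq> {}"
proof -
  obtain u where "(u, x) \<in> BW V E W" "u \<in> V" "u \<notin> W" "(u, y) \<in> BW V E W"
    using kw unfolding KW_def BWm_def by blast
  then show ?thesis using BW_cl[OF E] by blast
qed

lemma self_cl:
  assumes E: "E \<subseteq> V \<times> V" and x: "x \<in> V"
  shows "x \<in> clW V E W {x}"
  using in_clW[OF E x] by simp

theorem lemma1:
  fixes V :: "'a set" and E :: "'a rel" and W B C :: "'a set" and b c :: 'a
  assumes "V \<noteq> {}" and "E \<subseteq> V \<times> V" and "W \<subseteq> V"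
    and "B \<subseteq> V" and "C \<subseteq> V"
    and "B \<inter> C = {}" and "B \<inter> W = {}" and "C \<inter> W = {}"
    and "b \<in> B" and "c \<in> C"
    and "(b, c) \<in> AW V E W"
    and "clW V E W {b} \<inter> clW V E W {c} = {}"
  shows "\<exists>wb \<in> W. \<exists>wc \<in> W. (wb, wc) \<in> CW V E W
           \<and> clW V E W {b} \<inter> clW V E W {wb} \<noteq> {}
           \<and> clW V E W {c} \<inter> clW V E W {wc} \<noteq> {}"
proof -
  note E = assms(2)
  have bV: "b \<in> V" "b \<notin> W" using assms by auto
  have cV: "c \<in> V" "c \<notin> W" using assms by auto
  have bb: "b \<in> clW V E W {b}" using self_cl[OF E bV(1)] .
  have cc: "c \<in> clW V E W {c}" using self_cl[OF E cV(1)] .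
  have n1: "(b, c) \<notin> Id_on V" using assms by auto
  have n2: "(b, c) \<notin> BW V E W" using BW_cl[OF E _ bV] bb assms(12) by blast
  have n3: "(b, c) \<notin> BWm V E W" using BW_cl[OF E _ cV] cc assms(12)
    unfolding BWm_def by blast
  have n4: "(b, c) \<notin> KW V E W" using KW_common[OF E] assms(12) by blast
  obtain x y where bx: "(b, x) \<in> BW V E W \<union> KW V E W" and xy: "(x, y) \<in> CW V E W"
    and yc: "(y, c) \<in> BWm V E W \<union> converse (KW V E W)"
    using assms(11) n1 n2 n3 n4 unfolding AW_def by blast
  have xyW: "x \<in> W \<and> y \<in> W"
  proof -
    have "(x, y) \<in> (Id_on W O KW V E W O Id_on W)\<^sup>+ \<Longrightarrow> x \<in> W \<and> y \<in> W"
    proof -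
      assume h: "(x, y) \<in> (Id_on W O KW V E W O Id_on W)\<^sup>+"
      have "x \<in> W" using h by (induction rule: trancl_induct) auto
      moreover have "y \<in> W" using h by (induction rule: trancl_induct) auto
      ultimately show ?thesis by simp
    qed
    then show ?thesis using xy unfolding CW_def by blast
  qed
  have "clW V E W {b} \<inter> clW V E W {x} \<noteq> {}"
    using bx BW_cl[OF E _ bV] bb KW_common[OF E] by blast
  moreover have "clW V E W {c} \<inter> clW V E W {y} \<noteq> {}"
    using yc BW_cl[OF E _ cV] cc KW_common[OF E] unfolding BWm_def by blast
  ultimately show ?thesis using xy xyW by blast
qed

end
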